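(* Let $Y$ be an upwards skip-free Lévy chain with $h=1$, i.e. a compound Poisson process whose Lévy measure $\nu$ satisfies $\mathrm{supp}(\nu)\subset\mathbb Z$, $\mathrm{supp}(\nu|_{(0,\infty)})=\{1\}$ and $\nu(\{1\})>0$. Let $q\ge0$ and let $W^{(q)}$, $Z^{(q)}$ be its scale functions. Then for all $n\in\mathbb N\cup\{0\}$: $$W^{(q)}(n+1)=W^{(q)}(0)+\sum_{k=1}^{n+1}W^{(q)}(n+1-k)\frac{q+\nu((-\infty,-k])}{\nu(\{1\})},\qquad W^{(q)}(0)=\frac1{\nu(\{1\})},$$ and, with $\widetilde{Z^{(q)}}:=Z^{(q)}-1$, $$\widetilde{Z^{(q)}}(n+1)=(n+1)\frac{q}{\nu(\{1\})}+\sum_{k=1}^{n}\widetilde{Z^{(q)}}(n+1-k)\frac{q+\nu((-\infty,-k])}{\nu(\{1\})},\qquad \widetilde{Z^{(q)}}(0)=0.$$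
   Context: The Laplace exponent of $Y$ is $\varphi(\beta)=\int_{\mathbb R}(e^{\beta x}-1)\nu(dx)$, $\Re\beta\ge0$; $\varphi|_{[0,\infty)}$ is strictly convex with $\varphi(\beta)\to\infty$ as $\beta\to\infty$. Let $\Phi(q)$ be the largest root of $\varphi(\beta)=q$ in $[0,\infty)$. The scale function $W^{(q)}:\mathbb R\to[0,\infty)$ vanishes on $(-\infty,0)$ and on $[0,\infty)$ is the unique right-continuous, piecewise constant function of exponential order with $\int_0^\infty e^{-\beta x}W^{(q)}(x)dx=\frac{e^{\beta}-1}{\beta(\varphi(\beta)-q)}$ for $\beta>\Phi(q)$; and $Z^{(q)}(x)=1+q\int_0^{\lfloor x\rfloor}W^{(q)}(y)dy$, $x\in\mathbb R$. *)

theory Defs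
  imports "HOL-Analysis.Analysis"
begin

text \<open>An upwards skip-free Levy chain with h = 1 is a compound Poisson process whose
Levy measure is supported on the integers; we represent the Levy measure by its
point masses nu :: int => real.\<close>

definition skip_free_levy_measure :: "(int \<Rightarrow> real) \<Rightarrow> bool" where
  "skip_free_levy_measure nu \<longleftrightarrow>
     (\<forall>k. 0 \<le> nu k) \<and> nu 0 = 0 \<and> nu summable_on UNIV \<and>
     (\<forall>k\<ge>2. nu k = 0) \<and> 0 < nu 1"

definition laplace_exp :: "(int \<Rightarrow> real) \<Rightarrow> real \<Rightarrow> real" where
  "laplace_exp nu \<beta> = (\<Sum>\<^sub>\<infinity>k\<in>UNIV. (exp (\<beta> * of_int k) - 1) * nu k)"

definition Phi :: "(int \<Rightarrow> real) \<Rightarrow> real \<Rightarrow> real" where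
  "Phi nu q = Sup {\<beta>. 0 \<le> \<beta> \<and> laplace_exp nu \<beta> = q}"

definition piecewise_constant :: "(real \<Rightarrow> real) \<Rightarrow> bool" where
  "piecewise_constant W \<longleftrightarrow>
     (\<forall>a b. finite {x\<in>{a..b}. \<not> (\<exists>e>0. \<forall>y. \<bar>y - x\<bar> < e \<longrightarrow> W y = W x)})"

definition exp_order :: "(real \<Rightarrow> real) \<Rightarrow> bool" where
  "exp_order W \<longleftrightarrow> (\<exists>C c. \<forall>x\<ge>0. \<bar>W x\<bar> \<le> C * exp (c * x))"

definition is_scale_W :: "(int \<Rightarrow> real) \<Rightarrow> real \<Rightarrow> (real \<Rightarrow> real) \<Rightarrow> bool" where
  "is_scale_W nu q W \<longleftrightarrow>
     (\<forall>x. 0 \<le> W x) \<and> (\<forall>x<0. W x = 0) \<and>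
     (\<forall>x. continuous (at_right x) W) \<and> piecewise_constant W \<and> exp_order W \<and>
     (\<forall>\<beta>>Phi nu q. ((\<lambda>x. exp (- \<beta> * x) * W x) has_integral
         ((exp \<beta> - 1) / (\<beta> * (laplace_exp nu \<beta> - q)))) {0..})"

definition scale_W :: "(int \<Rightarrow> real) \<Rightarrow> real \<Rightarrow> real \<Rightarrow> real" where
  "scale_W nu q = (THE W. is_scale_W nu q W)"

definition scale_Z :: "(int \<Rightarrow> real) \<Rightarrow> real \<Rightarrow> real \<Rightarrow> real" where
  "scale_Z nu q x = 1 + q * integral {0..real_of_int \<lfloor>x\<rfloor>} (scale_W nu q)"

definition tail :: "(int \<Rightarrow> real) \<Rightarrow> nat \<Rightarrow> real" where
  "tail nu k = (\<Sum>\<^sub>\<infinity>j\<in>{..- int k}. nu j)"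

end

theory Submission
  imports Defs
begin


locale sf =
  fixes nu :: "int \<Rightarrow> real" and q :: real
  assumes sf: "skip_free_levy_measure nu" and q0: "0 \<le> q"
begin

lemma nu_nonneg: "0 \<le> nu k" using sf by (auto simp: skip_free_levy_measure_def)
lemma nu0: "nu 0 = 0" using sf by (auto simp: skip_free_levy_measure_def)
lemma nu_ge2: "k \<ge> 2 \<Longrightarrow> nu k = 0" using sf by (auto simp: skip_free_levy_measure_def)
lemma nu1: "0 < nu 1" using sf by (auto simp: skip_free_levy_measure_def)
lemma nu_summable: "nu summable_on UNIV" using sf by (auto simp: skip_free_levy_measure_def)

definition a :: "nat \<Rightarrow> real" where "a j = nu (- int j)"
definition Lam where "Lam = suminf a"
definition T :: "nat \<Rightarrow> real" where "T k = (\<Sum>j. a (j + k))"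

lemma a_nonneg: "0 \<le> a j" by (simp add: a_def nu_nonneg)
lemma a0: "a 0 = 0" by (simp add: a_def nu0)

lemma summable_a: "summable a"
proof -
  have "nu summable_on range (\<lambda>j::nat. - int j)" by (rule summable_on_subset_banach[OF nu_summable]) auto
  then have "(nu \<circ> (\<lambda>j::nat. - int j)) summable_on UNIV"
    by (subst summable_on_reindex[symmetric]) (auto simp: inj_on_def)
  then show ?thesis by (auto dest!: summable_on_imp_summable simp: a_def[abs_def] o_def)
qed

lemma Lam_nonneg: "0 \<le> Lam" unfolding Lam_def by (rule suminf_nonneg[OF summable_a a_nonneg])

lemma has_sum_neg:
  fixes h :: "int \<Rightarrow> real"
  assumes "\<And>k. k > 0 \<Longrightarrow> h k = 0" "summable (\<lambda>j. \<bar>h (- int j)\<bar>)" "(\<lambda>j. h (- int j)) sums s"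
  shows "(h has_sum s) UNIV"
proof -
  have "((\<lambda>j. h (- int j)) has_sum s) UNIV" using norm_summable_imp_has_sum[of "\<lambda>j. h (- int j)"] assms(2,3) by simp
  then have "(h has_sum s) (range (\<lambda>j::nat. - int j))" by (subst has_sum_reindex) (auto simp: inj_on_def o_def)
  moreover have "h x = 0" if "x \<notin> range (\<lambda>j::nat. - int j)" for x
  proof -
    have "x > 0"
    proof (rule ccontr)
      assume "\<not> x > 0" then have "x = - int (nat (-x))" by simp
      with that show False by blast
    qed
    then show ?thesis by (rule assms(1))
  qed
  ultimately show ?thesis by (subst has_sum_cong_neutral[where T="range (\<lambda>j::nat. - int j)" and g=h]) auto
qed

lemma T_sums: "(\<lambda>j. a (j + k)) sums T k"
  unfolding T_def by (rule summable_sums) (simp add: summable_a)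

lemma tail_eq: "tail nu k = T k"
proof -
  have "((\<lambda>j. a (j + k)) has_sum T k) UNIV"
    using norm_summable_imp_has_sum[OF _ T_sums] summable_a a_nonneg by simp
  then have "((nu \<circ> (\<lambda>j::nat. - int (j + k))) has_sum T k) UNIV" by (simp add: a_def o_def)
  then have "(nu has_sum T k) (range (\<lambda>j::nat. - int (j + k)))"
    by (subst has_sum_reindex) (auto simp: inj_on_def)
  moreover have "range (\<lambda>j::nat. - int (j + k)) = {..- int k}"
  proof safe
    fix x :: int assume "x \<le> - int k"
    then show "x \<in> range (\<lambda>j::nat. - int (j + k))" by (intro image_eqI[of _ _ "nat (- x) - k"]) auto
  qed auto
  ultimately show ?thesis unfolding tail_def by (simp add: infsumI)
qed

lemma T_Suc: "T k = T (Suc k) + a k"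
proof -
  have "(\<lambda>j. a (Suc j + k)) sums T (Suc k)" using T_sums[of "Suc k"] by simp
  then have "(\<lambda>j. a (j + k)) sums (T (Suc k) + a k)" by (subst (asm) sums_Suc_iff) simp
  then show ?thesis using T_sums sums_unique2 by blast
qed

lemma T0: "T 0 = Lam" by (simp add: T_def Lam_def)
lemma T_nonneg: "0 \<le> T k" unfolding T_def by (rule suminf_nonneg) (auto simp: summable_a a_nonneg)
lemma T_le: "T k \<le> Lam"
proof (induction k)
  case 0 then show ?case by (simp add: T0)
next
  case (Suc k) then show ?case using T_Suc[of k] a_nonneg[of k] by simp
qed

end

context sf begin

definition P :: "real \<Rightarrow> real" where "P z = (\<Sum>j. a j * z ^ j)"

lemma summable_P: "0 \<le> z \<Longrightarrow> z \<le> 1 \<Longrightarrow> summable (\<lambda>j. a j * z ^ j)"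
  by (rule summable_comparison_test'[OF summable_a, of 0])
     (auto simp: a_nonneg mult_left_le power_le_one)

lemma P_nonneg: "0 \<le> z \<Longrightarrow> z \<le> 1 \<Longrightarrow> 0 \<le> P z"
  unfolding P_def by (rule suminf_nonneg[OF summable_P]) (auto simp: a_nonneg)

lemma laplace_eq:
  assumes "0 \<le> \<beta>"
  shows "laplace_exp nu \<beta> = nu 1 * (exp \<beta> - 1) + P (exp (-\<beta>)) - Lam"
proof -
  define z where "z = exp (-\<beta>)"
  have z: "0 < z" "z \<le> 1" using assms by (auto simp: z_def)
  let ?h = "\<lambda>k::int. (exp (\<beta> * of_int k) - 1) * nu k"
  let ?h1 = "\<lambda>k::int. if k = 1 then (exp \<beta> - 1) * nu 1 else 0"
  let ?h2 = "\<lambda>k::int. if k \<le> 0 then ?h k else 0"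
  have h: "?h k = ?h1 k + ?h2 k" for k using nu_ge2[of k] by auto
  have 1: "(?h1 has_sum ((exp \<beta> - 1) * nu 1)) UNIV"
  proof -
    have "(?h1 has_sum ((exp \<beta> - 1) * nu 1)) {1}" using has_sum_finite[of "{1::int}" ?h1] by simp
    then show ?thesis by (subst has_sum_cong_neutral[where T="{1}" and g="?h1"]) auto
  qed
  have eq2: "?h2 (- int j) = a j * z ^ j - a j" for j
  proof -
    have "\<beta> * of_int (- int j) = real j * (-\<beta>)" by simp
    then have "exp (\<beta> * of_int (- int j)) = z ^ j" by (simp only: z_def exp_of_nat_mult)
    then show ?thesis by (simp add: a_def algebra_simps)
  qed
  have "\<bar>a j * z ^ j - a j\<bar> \<le> a j" for j
  proof -
    have "a j * z ^ j \<le> a j" using z by (simp add: a_nonneg mult_left_le power_le_one)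
    moreover have "0 \<le> a j * z ^ j" using z by (simp add: a_nonneg)
    ultimately show ?thesis by simp
  qed
  then have "summable (\<lambda>j. \<bar>?h2 (- int j)\<bar>)"
    unfolding eq2
    by (intro summable_comparison_test'[OF summable_a, of 0]) auto
  moreover have "(\<lambda>j. ?h2 (- int j)) sums (P z - Lam)"
    unfolding eq2 P_def Lam_def
    by (intro sums_diff summable_sums summable_P summable_a) (use z in auto)
  ultimately have 2: "(?h2 has_sum (P z - Lam)) UNIV"
    by (intro has_sum_neg) auto
  have "(?h has_sum ((exp \<beta> - 1) * nu 1 + (P z - Lam))) UNIV"
  proof -
    have lam: "?h = (\<lambda>k. ?h1 k + ?h2 k)" by (rule ext, rule h)
    show ?thesis by (subst lam) (rule has_sum_add[OF 1 2])
  qed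
  then have "laplace_exp nu \<beta> = (exp \<beta> - 1) * nu 1 + (P z - Lam)"
    unfolding laplace_exp_def by (rule infsumI)
  then show ?thesis by (simp add: z_def mult.commute)
qed

lemma cont_P: "continuous_on {0..1} P"
proof (rule uniform_limit_theorem)
  show "\<forall>\<^sub>F n in sequentially. continuous_on {0..1} (\<lambda>x. \<Sum>i<n. a i * x ^ i)"
    by (intro always_eventually allI continuous_intros)
  show "uniform_limit {0..1} (\<lambda>n x. \<Sum>i<n. a i * x ^ i) P sequentially"
    unfolding P_def[abs_def]
    by (rule Weierstrass_m_test[OF _ summable_a]) (auto simp: a_nonneg mult_left_le power_le_one)
qed auto

definition ell :: "real \<Rightarrow> real" where "ell \<beta> = nu 1 * (exp \<beta> - 1) + P (exp (-\<beta>)) - Lam"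

lemma cont_ell: "continuous_on {0..} ell"
proof -
  have "continuous_on {0..} (\<lambda>\<beta>. P (exp (-\<beta>)))"
    by (rule continuous_on_compose2[OF cont_P]) (auto intro!: continuous_intros)
  then show ?thesis unfolding ell_def by (intro continuous_intros)
qed

definition B0 where "B0 = ln (2 + (q + Lam) / nu 1)"

lemma B0_aux: "0 \<le> (q + Lam) / nu 1"
  using q0 Lam_nonneg nu1 by (intro divide_nonneg_pos) auto

lemma B0_pos: "0 < B0"
  using B0_aux unfolding B0_def by (intro ln_gt_zero) linarith

lemma ell_big: assumes "B0 \<le> \<beta>" shows "q < ell \<beta>"
proof -
  have pos: "0 < 2 + (q + Lam) / nu 1" using B0_aux by linarith
  have "2 + (q + Lam) / nu 1 \<le> exp \<beta>"
    using assms pos unfolding B0_def by (metis exp_ln exp_le_cancel_iff)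
  then have "nu 1 * (2 + (q + Lam) / nu 1) \<le> nu 1 * exp \<beta>" using nu1 by simp
  moreover have "nu 1 * (2 + (q + Lam) / nu 1) = 2 * nu 1 + q + Lam" using nu1 by (simp add: field_simps)
  ultimately have "2 * nu 1 + q + Lam \<le> nu 1 * exp \<beta>" by linarith
  moreover have "0 \<le> P (exp (-\<beta>))" using assms B0_pos by (intro P_nonneg) auto
  ultimately show ?thesis using nu1 unfolding ell_def by (simp add: algebra_simps)
qed

lemma ell0: "ell 0 = 0" unfolding ell_def P_def Lam_def by simp

definition RS where "RS = {\<beta>. 0 \<le> \<beta> \<and> laplace_exp nu \<beta> = q}"

lemma RS_eq: "RS = {\<beta>. 0 \<le> \<beta> \<and> ell \<beta> = q}"
  unfolding RS_def ell_def using laplace_eq by auto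

lemma RS_bdd: "bdd_above RS"
proof (rule bdd_aboveI[of _ B0])
  fix x assume "x \<in> RS"
  then have "ell x = q" unfolding RS_eq by auto
  then show "x \<le> B0" using ell_big[of x] by linarith
qed

lemma root_exists: assumes "0 \<le> x" "ell x \<le> q" shows "\<exists>r\<ge>x. r \<in> RS"
proof -
  define B where "B = max x B0"
  have "ell B > q" using ell_big by (simp add: B_def)
  then have qB: "q \<le> ell B" by simp
  have cont: "continuous_on {x..B} ell" by (rule continuous_on_subset[OF cont_ell]) (use assms in auto)
  have xB: "x \<le> B" by (simp add: B_def)
  have "\<exists>r. x \<le> r \<and> r \<le> B \<and> ell r = q"
    using IVT'[of ell x q B, OF assms(2) qB xB cont] by blast
  then obtain r where "x \<le> r" "r \<le> B" "ell r = q" by blast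
  then show ?thesis using assms unfolding RS_eq by auto
qed

lemma Phi_nonneg: "0 \<le> Phi nu q"
proof -
  obtain r where "r \<ge> 0" "r \<in> RS" using root_exists[of 0] ell0 q0 by auto
  then show ?thesis unfolding Phi_def RS_def[symmetric] using RS_bdd cSup_upper[of r RS] by auto
qed

lemma Phi_above: assumes "Phi nu q < \<beta>" shows "q < laplace_exp nu \<beta>"
proof (rule ccontr)
  assume nq: "\<not> q < laplace_exp nu \<beta>"
  have b0: "0 \<le> \<beta>" using Phi_nonneg assms by simp
  then have "ell \<beta> \<le> q" using nq laplace_eq by (simp add: ell_def)
  then obtain r where "r \<ge> \<beta>" "r \<in> RS" using root_exists b0 by auto
  then have "r \<le> Phi nu q" unfolding Phi_def RS_def[symmetric] using RS_bdd cSup_upper by auto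
  then show False using assms \<open>r \<ge> \<beta>\<close> by simp
qed

end

context sf begin

definition cc :: "nat \<Rightarrow> real" where "cc k = (q + T k) / nu 1"

lemma cc_nonneg: "0 \<le> cc k" unfolding cc_def using q0 T_nonneg nu1 by (intro divide_nonneg_pos) auto
lemma cc_le: "cc k \<le> (q + Lam) / nu 1" unfolding cc_def using T_le nu1 by (intro divide_right_mono) auto

function w :: "nat \<Rightarrow> real" where "w n = 1 / nu 1 + (\<Sum>i<n. w i * cc (n - i))"
  by auto
termination by (relation "Wellfounded.measure id") auto
declare w.simps[simp del]

lemma w_pos: "1 / nu 1 \<le> w n"
proof (induction n rule: less_induct)
  case (less n)
  have "0 \<le> (\<Sum>i<n. w i * cc (n - i))"
  proof (intro sum_nonneg mult_nonneg_nonneg cc_nonneg)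
    fix i assume "i \<in> {..<n}"
    then have "1 / nu 1 \<le> w i" using less by simp
    moreover have "0 \<le> 1 / nu 1" using nu1 by simp
    ultimately show "0 \<le> w i" by linarith
  qed
  then show ?case by (subst w.simps) simp
qed

lemma w_nonneg: "0 \<le> w n" using w_pos[of n] nu1 by (smt (verit) divide_pos_pos)

definition G :: "real \<Rightarrow> nat \<Rightarrow> real" where "G z k = (if k = 0 then 0 else cc k * z ^ k)"
definition CZ :: "real \<Rightarrow> real" where "CZ z = suminf (G z)"

lemma summable_G: assumes "0 \<le> z" "z < 1" shows "summable (G z)"
proof (rule summable_comparison_test'[of "\<lambda>k. (q + Lam) / nu 1 * z ^ k" 0])
  show "summable (\<lambda>k. (q + Lam) / nu 1 * z ^ k)" using assms by (intro summable_mult summable_geometric) auto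
  fix n :: nat
  have "cc n * z ^ n \<le> (q + Lam) / nu 1 * z ^ n" using assms by (intro mult_right_mono cc_le) auto
  then show "norm (G z n) \<le> (q + Lam) / nu 1 * z ^ n"
    using assms cc_nonneg[of n] B0_aux by (auto simp: G_def)
qed

lemma G_nonneg: "0 \<le> z \<Longrightarrow> 0 \<le> G z k" by (simp add: G_def cc_nonneg)

lemma CZ_identity:
  assumes "0 < z" "z < 1"
  shows "nu 1 * (1 - z) * (1 - CZ z) = nu 1 * (1 - z) + z * P z - z * q - z * Lam"
proof -
  have sT: "summable (\<lambda>k. T k * z ^ k)"
    by (rule summable_comparison_test'[of "\<lambda>k. Lam * z ^ k" 0])
       (use assms T_nonneg T_le in \<open>auto intro!: summable_mult summable_geometric mult_right_mono\<close>)
  define SY where "SY = (\<Sum>k. T k * z ^ k)"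
  have SY: "(\<lambda>k. T k * z ^ k) sums SY" unfolding SY_def using sT by (rule summable_sums)
  have Pz: "(\<lambda>k. a k * z ^ k) sums P z" unfolding P_def
    by (rule summable_sums[OF summable_P]) (use assms in auto)
  have "(\<lambda>k. T (Suc k) * z ^ Suc k) sums (SY - T 0)"
    using SY by (subst sums_Suc_iff) simp
  moreover have "(\<lambda>k. T (Suc k) * z ^ Suc k) sums (z * SY - z * P z)"
  proof -
    have "(\<lambda>k. z * (T k * z ^ k) - z * (a k * z ^ k)) sums (z * SY - z * P z)"
      by (intro sums_diff sums_mult SY Pz)
    moreover have "z * (T k * z ^ k) - z * (a k * z ^ k) = T (Suc k) * z ^ Suc k" for k
      using T_Suc[of k] by (simp add: algebra_simps)
    ultimately show ?thesis by simp
  qed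
  ultimately have eq1: "SY - Lam = z * SY - z * P z" using sums_unique2 T0 by metis
  have geo: "(\<lambda>k. z ^ k) sums (1 / (1 - z))" using assms by (intro geometric_sums) auto
  have "(\<lambda>k. (q * z ^ k + T k * z ^ k) / nu 1) sums ((q * (1 / (1 - z)) + SY) / nu 1)"
    by (intro sums_divide sums_add sums_mult geo SY)
  then have full: "(\<lambda>k. cc k * z ^ k) sums ((q / (1 - z) + SY) / nu 1)"
    by (simp add: cc_def algebra_simps)
  have "(\<lambda>k. cc (Suc k) * z ^ Suc k) sums ((q / (1 - z) + SY) / nu 1 - cc 0)"
    by (subst sums_Suc_iff) (use full in simp)
  then have "(\<lambda>k. G z (Suc k)) sums ((q / (1 - z) + SY) / nu 1 - cc 0)"
    by (simp add: G_def)
  then have "G z sums ((q / (1 - z) + SY) / nu 1 - cc 0)"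
    by (subst (asm) sums_Suc_iff) (simp add: G_def)
  then have CZ: "CZ z = (q / (1 - z) + SY) / nu 1 - (q + Lam) / nu 1"
    unfolding CZ_def by (simp add: sums_iff cc_def T0)
  have ne: "1 - z \<noteq> 0" using assms by simp
  have "nu 1 * (1 - z) * (1 - CZ z) = nu 1 * (1 - z) - (q + (1 - z) * SY - (1 - z) * (q + Lam))"
    unfolding CZ using nu1 ne by (simp add: field_simps)
  also have "\<dots> = nu 1 * (1 - z) + z * P z - z * q - z * Lam"
    using eq1 by (simp add: algebra_simps)
  finally show ?thesis .
qed

lemma F_rec:
  "w n * z ^ n = z ^ n / nu 1 + (\<Sum>i<n. (w i * z ^ i) * G z (n - i))"
proof -
  have "w n * z ^ n = z ^ n / nu 1 + (\<Sum>i<n. w i * cc (n - i)) * z ^ n"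
    by (subst w.simps) (simp add: algebra_simps)
  also have "(\<Sum>i<n. w i * cc (n - i)) * z ^ n = (\<Sum>i<n. (w i * z ^ i) * G z (n - i))"
    unfolding sum_distrib_right
  proof (rule sum.cong[OF refl])
    fix i assume "i \<in> {..<n}"
    then have "z ^ n = z ^ i * z ^ (n - i)" by (simp add: power_add[symmetric])
    then show "w i * cc (n - i) * z ^ n = w i * z ^ i * G z (n - i)"
      using \<open>i \<in> {..<n}\<close> by (simp add: G_def)
  qed
  finally show ?thesis .
qed

lemma W_gen:
  assumes "0 < z" "z < 1" "CZ z < 1"
  shows "(\<lambda>n. w n * z ^ n) sums (1 / (nu 1 * (1 - z) * (1 - CZ z)))"
proof -
  define F where "F n = w n * z ^ n" for n
  have F0: "0 \<le> F n" for n unfolding F_def using assms w_nonneg by simp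
  have geo: "(\<lambda>k. z ^ k) sums (1 / (1 - z))" using assms by (intro geometric_sums) auto
  have sG: "summable (G z)" using assms by (intro summable_G) auto
  have inner: "(\<Sum>n\<in>{Suc i..m}. G z (n - i)) \<le> CZ z" for i m
  proof -
    have "(\<Sum>n\<in>{Suc i..m}. G z (n - i)) = sum (G z) ((\<lambda>n. n - i) ` {Suc i..m})"
      by (subst sum.reindex) (auto simp: inj_on_def)
    also have "\<dots> \<le> CZ z" unfolding CZ_def
      by (rule sum_le_suminf[OF sG]) (use assms G_nonneg in auto)
    finally show ?thesis .
  qed
  have dbl: "(\<Sum>n<N. \<Sum>i<n. F i * G z (n - i)) \<le> (\<Sum>i<N. F i) * CZ z" for N
  proof (cases N)
    case 0 then show ?thesis by simp
  next
    case (Suc m)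
    have "(\<Sum>n<N. \<Sum>i<n. F i * G z (n - i)) = (\<Sum>n\<le>m. \<Sum>i<n. F i * G z (n - i))"
      using Suc by (simp add: lessThan_Suc_atMost)
    also have "\<dots> = (\<Sum>i<m. \<Sum>n\<in>{Suc i..m}. F i * G z (n - i))"
      by (rule sum.nested_swap')
    also have "\<dots> = (\<Sum>i<m. F i * (\<Sum>n\<in>{Suc i..m}. G z (n - i)))"
      by (simp add: sum_distrib_left)
    also have "\<dots> \<le> (\<Sum>i<m. F i * CZ z)"
      by (intro sum_mono mult_left_mono inner F0)
    also have "\<dots> \<le> (\<Sum>i<N. F i * CZ z)"
    proof -
      have "0 \<le> CZ z" unfolding CZ_def by (rule suminf_nonneg[OF sG]) (use assms G_nonneg in auto)
      then show ?thesis using Suc F0 by (simp add: sum.lessThan_Suc)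
    qed
    finally show ?thesis by (simp add: sum_distrib_right)
  qed
  have bnd: "(\<Sum>n<N. F n) \<le> 1 / (nu 1 * (1 - z) * (1 - CZ z))" for N
  proof -
    have "(\<Sum>n<N. F n) = (\<Sum>n<N. z ^ n / nu 1) + (\<Sum>n<N. \<Sum>i<n. F i * G z (n - i))"
      unfolding F_def by (subst F_rec) (simp add: sum.distrib)
    also have "(\<Sum>n<N. z ^ n / nu 1) = (\<Sum>n<N. z ^ n) / nu 1" by (simp add: sum_divide_distrib)
    also have "(\<Sum>n<N. z ^ n) \<le> 1 / (1 - z)"
      using sum_le_suminf[OF sums_summable[OF geo], of "{..<N}"] sums_unique[OF geo] assms by auto
    then have "(\<Sum>n<N. z ^ n) / nu 1 \<le> 1 / (1 - z) / nu 1" using nu1 by (intro divide_right_mono) auto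
    finally have "(\<Sum>n<N. F n) \<le> 1 / (1 - z) / nu 1 + (\<Sum>i<N. F i) * CZ z" using dbl[of N] by linarith
    then have "(\<Sum>n<N. F n) * (1 - CZ z) \<le> 1 / (1 - z) / nu 1" by (simp add: algebra_simps)
    then have "(nu 1 * (1 - z)) * ((\<Sum>n<N. F n) * (1 - CZ z)) \<le> (nu 1 * (1 - z)) * (1 / (1 - z) / nu 1)"
      using assms nu1 by (intro mult_left_mono) auto
    also have "\<dots> = 1" using assms nu1 by (simp add: field_simps)
    finally have "(\<Sum>n<N. F n) * (nu 1 * (1 - z) * (1 - CZ z)) \<le> 1" by (simp add: algebra_simps)
    moreover have "0 < nu 1 * (1 - z) * (1 - CZ z)" using assms nu1 by simp
    ultimately show ?thesis by (simp add: pos_le_divide_eq)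
  qed
  have sF: "summable F" by (rule summableI_nonneg_bounded[OF F0 bnd])
  have "(\<lambda>k. \<Sum>i\<le>k. F i * G z (k - i)) sums (suminf F * CZ z)"
    unfolding CZ_def using sF sG F0 G_nonneg assms by (intro Cauchy_product_sums) auto
  moreover have "(\<Sum>i\<le>k. F i * G z (k - i)) = F k - z ^ k / nu 1" for k
    using F_rec[of k z] by (simp add: F_def lessThan_Suc_atMost[symmetric] G_def)
  ultimately have "(\<lambda>k. F k - z ^ k / nu 1) sums (suminf F * CZ z)" by simp
  then have "(\<lambda>k. (F k - z ^ k / nu 1) + z ^ k / nu 1) sums (suminf F * CZ z + 1 / (1 - z) / nu 1)"
    by (intro sums_add sums_divide geo)
  then have "F sums (suminf F * CZ z + 1 / (1 - z) / nu 1)" by simp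
  then have eq: "suminf F = suminf F * CZ z + 1 / (1 - z) / nu 1" using sums_unique by metis
  have "suminf F = 1 / (nu 1 * (1 - z) * (1 - CZ z))"
  proof -
    have "suminf F * (1 - CZ z) = 1 / (1 - z) / nu 1" using eq by (simp add: algebra_simps)
    then have "suminf F * (1 - CZ z) * (nu 1 * (1 - z)) = 1 / (1 - z) / nu 1 * (nu 1 * (1 - z))" by simp
    also have "\<dots> = 1" using assms nu1 by (simp add: field_simps)
    finally have "suminf F * (nu 1 * (1 - z) * (1 - CZ z)) = 1" by (simp add: algebra_simps)
    moreover have "nu 1 * (1 - z) * (1 - CZ z) \<noteq> 0" using assms nu1 by simp
    ultimately show ?thesis by (simp add: eq_divide_eq)
  qed
  then show ?thesis using sF summable_sums unfolding F_def by fastforce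
qed

end

context sf begin

definition Wf :: "real \<Rightarrow> real" where "Wf x = (if x < 0 then 0 else w (nat \<lfloor>x\<rfloor>))"

lemma Wf_nonneg: "0 \<le> Wf x" by (simp add: Wf_def w_nonneg)
lemma Wf_neg: "x < 0 \<Longrightarrow> Wf x = 0" by (simp add: Wf_def)
lemma Wf_nat: "Wf (real n) = w n" by (simp add: Wf_def)
lemma Wf_ivl: "real m \<le> x \<Longrightarrow> x < real m + 1 \<Longrightarrow> Wf x = w m"
proof -
  assume "real m \<le> x" "x < real m + 1"
  then have "\<lfloor>x\<rfloor> = int m" by (simp add: floor_eq_iff)
  then show ?thesis using \<open>real m \<le> x\<close> by (simp add: Wf_def)
qed

lemma Wf_rcont: "continuous (at_right x) Wf"
proof -
  have "\<forall>\<^sub>F y in at_right x. Wf y = Wf x"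
  proof (cases "x < 0")
    case True
    show ?thesis unfolding eventually_at_right_field
      by (rule exI[of _ 0]) (use True in \<open>auto simp: Wf_neg\<close>)
  next
    case False
    define m where "m = nat \<lfloor>x\<rfloor>"
    have m: "real m \<le> x" "x < real m + 1" using False by (auto simp: m_def)
    show ?thesis unfolding eventually_at_right_field
      by (rule exI[of _ "real m + 1"]) (use m Wf_ivl in auto)
  qed
  then show ?thesis unfolding continuous_within by (rule tendsto_eventually)
qed

lemma Wf_loc_const:
  assumes "x \<notin> \<int>"
  shows "\<exists>e>0. \<forall>y. \<bar>y - x\<bar> < e \<longrightarrow> Wf y = Wf x"
proof -
  have f1: "of_int \<lfloor>x\<rfloor> < x"
  proof -
    have "of_int \<lfloor>x\<rfloor> \<noteq> x" using assms by (metis Ints_of_int)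
    then show ?thesis using of_int_floor_le[of x] by linarith
  qed
  have f2: "x < of_int \<lfloor>x\<rfloor> + 1" by simp
  define e where "e = min (x - of_int \<lfloor>x\<rfloor>) (of_int \<lfloor>x\<rfloor> + 1 - x)"
  have "e > 0" using f1 f2 by (simp add: e_def)
  moreover have "Wf y = Wf x" if "\<bar>y - x\<bar> < e" for y
  proof -
    have y: "of_int \<lfloor>x\<rfloor> < y" "y < of_int \<lfloor>x\<rfloor> + 1" using that by (auto simp: e_def)
    then have fl: "\<lfloor>y\<rfloor> = \<lfloor>x\<rfloor>" by (simp add: floor_eq_iff)
    show ?thesis
    proof (cases "x < 0")
      case True
      then have "\<lfloor>x\<rfloor> \<le> -1" by linarith
      then have "y < 0" using y by linarith
      then show ?thesis using True by (simp add: Wf_neg)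
    next
      case False
      then have "\<lfloor>x\<rfloor> \<ge> 0" by simp
      then have "\<not> y < 0" using y by linarith
      then show ?thesis using False fl by (simp add: Wf_def)
    qed
  qed
  ultimately show ?thesis by blast
qed

lemma Wf_pc: "piecewise_constant Wf"
  unfolding piecewise_constant_def
proof (intro allI)
  fix a b :: real
  have "{x\<in>{a..b}. \<not> (\<exists>e>0. \<forall>y. \<bar>y - x\<bar> < e \<longrightarrow> Wf y = Wf x)} \<subseteq> of_int ` {\<lceil>a\<rceil>..\<lfloor>b\<rfloor>}"
  proof
    fix x assume x: "x \<in> {x\<in>{a..b}. \<not> (\<exists>e>0. \<forall>y. \<bar>y - x\<bar> < e \<longrightarrow> Wf y = Wf x)}"
    then have "x \<in> \<int>" using Wf_loc_const by blast
    then obtain k where k: "x = of_int k" by (auto elim: Ints_cases)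
    then show "x \<in> of_int ` {\<lceil>a\<rceil>..\<lfloor>b\<rfloor>}" using x by (auto simp: ceiling_le_iff le_floor_iff)
  qed
  then show "finite {x\<in>{a..b}. \<not> (\<exists>e>0. \<forall>y. \<bar>y - x\<bar> < e \<longrightarrow> Wf y = Wf x)}"
    by (rule finite_subset) simp
qed

definition MM where "MM = (q + Lam) / nu 1"

lemma geo_id: "MM * (\<Sum>i<n. (1 + MM) ^ i) = (1 + MM) ^ n - 1"
  by (induction n) (auto simp: algebra_simps)

lemma w_bound: "w n \<le> 1 / nu 1 * (1 + MM) ^ n"
proof (induction n rule: less_induct)
  case (less n)
  have M0: "0 \<le> MM" unfolding MM_def by (rule B0_aux)
  have "(\<Sum>i<n. w i * cc (n - i)) \<le> (\<Sum>i<n. 1 / nu 1 * (1 + MM) ^ i * MM)"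
  proof (rule sum_mono)
    fix i assume "i \<in> {..<n}"
    show "w i * cc (n - i) \<le> 1 / nu 1 * (1 + MM) ^ i * MM"
    proof (rule mult_mono)
      show "w i \<le> 1 / nu 1 * (1 + MM) ^ i" using less[of i] \<open>i \<in> {..<n}\<close> by simp
      show "cc (n - i) \<le> MM" unfolding MM_def by (rule cc_le)
      show "0 \<le> 1 / nu 1 * (1 + MM) ^ i" using M0 nu1 by simp
      show "0 \<le> cc (n - i)" by (rule cc_nonneg)
    qed
  qed
  also have "\<dots> = 1 / nu 1 * (MM * (\<Sum>i<n. (1 + MM) ^ i))"
    by (simp add: sum_distrib_left sum_distrib_right algebra_simps)
  also have "\<dots> = 1 / nu 1 * ((1 + MM) ^ n - 1)" by (simp add: geo_id)
  finally show ?case by (subst w.simps) (simp add: algebra_simps)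
qed

lemma Wf_exp_order: "exp_order Wf"
  unfolding exp_order_def
proof (intro exI allI impI)
  fix x :: real assume x: "0 \<le> x"
  have M0: "0 \<le> MM" unfolding MM_def by (rule B0_aux)
  define n where "n = nat \<lfloor>x\<rfloor>"
  have nx: "real n \<le> x" using x by (simp add: n_def)
  have "(1 + MM) ^ n = exp (real n * ln (1 + MM))"
    using M0 by (simp add: exp_of_nat_mult)
  also have "\<dots> \<le> exp (ln (1 + MM) * x)"
  proof -
    have "real n * ln (1 + MM) \<le> x * ln (1 + MM)" using M0 nx by (intro mult_right_mono) auto
    then show ?thesis by (simp add: mult.commute)
  qed
  finally have "(1 + MM) ^ n \<le> exp (ln (1 + MM) * x)" .
  then have "1 / nu 1 * (1 + MM) ^ n \<le> 1 / nu 1 * exp (ln (1 + MM) * x)"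
    using nu1 by (intro mult_left_mono) auto
  moreover have "\<bar>Wf x\<bar> = w n" using x by (simp add: Wf_def n_def w_nonneg)
  ultimately show "\<bar>Wf x\<bar> \<le> 1 / nu 1 * exp (ln (1 + MM) * x)" using w_bound[of n] by simp
qed

end

context sf begin

lemma exp_nat: "exp (- \<beta> * real m) = exp (-\<beta>) ^ m"
proof -
  have "- \<beta> * real m = real m * (-\<beta>)" by simp
  then show ?thesis by (simp only: exp_of_nat_mult)
qed

lemma piece:
  assumes "\<beta> > 0"
  shows "((\<lambda>x. exp (- \<beta> * x) * Wf x) has_integral (w m * (exp (-\<beta>) ^ m - exp (-\<beta>) ^ Suc m) / \<beta>)) {real m..real m + 1}"
proof -
  let ?f = "\<lambda>x. - w m * exp (- \<beta> * x) / \<beta>"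
  have "((\<lambda>x. w m * exp (- \<beta> * x)) has_integral (?f (real m + 1) - ?f (real m))) {real m..real m + 1}"
  proof (rule fundamental_theorem_of_calculus)
    show "real m \<le> real m + 1" by simp
    fix x assume "x \<in> {real m..real m + 1}"
    have "(?f has_real_derivative w m * exp (- \<beta> * x)) (at x within {real m..real m + 1})"
      using assms by (auto intro!: derivative_eq_intros simp: field_simps)
    then show "(?f has_vector_derivative w m * exp (- \<beta> * x)) (at x within {real m..real m + 1})"
      by (simp add: has_real_derivative_iff_has_vector_derivative)
  qed
  moreover have "?f (real m + 1) - ?f (real m) = w m * (exp (-\<beta>) ^ m - exp (-\<beta>) ^ Suc m) / \<beta>"
  proof -
    have "exp (- \<beta> * (real m + 1)) = exp (- \<beta> * real (Suc m))" by simp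
    then show ?thesis using assms by (simp only: exp_nat) (simp add: field_simps)
  qed
  ultimately have I: "((\<lambda>x. w m * exp (- \<beta> * x)) has_integral (w m * (exp (-\<beta>) ^ m - exp (-\<beta>) ^ Suc m) / \<beta>)) {real m..real m + 1}"
    by simp
  show ?thesis
    by (rule has_integral_spike_finite[OF _ _ I, of "{real m + 1}"]) (auto simp: Wf_ivl)
qed

lemma int_0N:
  assumes "\<beta> > 0"
  shows "((\<lambda>x. exp (- \<beta> * x) * Wf x) has_integral ((\<Sum>m<N. w m * (exp (-\<beta>) ^ m - exp (-\<beta>) ^ Suc m)) / \<beta>)) {0..real N}"
proof (induction N)
  case 0
  then show ?case using has_integral_refl(2)[of "\<lambda>x. exp (- \<beta> * x) * Wf x" 0] by simp
next
  case (Suc N)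
  have "((\<lambda>x. exp (- \<beta> * x) * Wf x) has_integral
     ((\<Sum>m<N. w m * (exp (-\<beta>) ^ m - exp (-\<beta>) ^ Suc m)) / \<beta> + w N * (exp (-\<beta>) ^ N - exp (-\<beta>) ^ Suc N) / \<beta>)) {0..real N + 1}"
    by (rule has_integral_combine[OF _ _ Suc.IH piece[OF assms]]) auto
  then show ?case by (simp add: add_divide_distrib add.commute)
qed

lemma laplace_Wf:
  assumes "Phi nu q < \<beta>"
  shows "((\<lambda>x. exp (- \<beta> * x) * Wf x) has_integral ((exp \<beta> - 1) / (\<beta> * (laplace_exp nu \<beta> - q)))) {0..}"
proof -
  have b: "\<beta> > 0" using Phi_nonneg assms by simp
  define z where "z = exp (-\<beta>)"
  have z: "0 < z" "z < 1" using b by (auto simp: z_def)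
  have ze: "z * exp \<beta> = 1" by (simp add: z_def exp_minus)
  define L where "L = laplace_exp nu \<beta>"
  have Lq: "q < L" unfolding L_def by (rule Phi_above[OF assms])
  have Leq: "L = nu 1 * (exp \<beta> - 1) + P z - Lam" unfolding L_def z_def using b by (simp add: laplace_eq)
  have ident: "nu 1 * (1 - z) * (1 - CZ z) = z * (L - q)"
  proof -
    have "z * (L - q) = nu 1 * (z * exp \<beta> - z) + z * P z - z * Lam - z * q"
      unfolding Leq by (simp add: algebra_simps)
    then show ?thesis using CZ_identity[OF z] ze by simp
  qed
  have pos: "0 < z * (L - q)" using z Lq by simp
  have "0 < 1 - CZ z"
  proof (rule ccontr)
    assume "\<not> 0 < 1 - CZ z"
    then have "nu 1 * (1 - z) * (1 - CZ z) \<le> 0" using z nu1 by (intro mult_nonneg_nonpos) auto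
    then show False using ident pos by simp
  qed
  then have gen: "(\<lambda>n. w n * z ^ n) sums (1 / (z * (L - q)))"
    using W_gen[OF z] ident by simp
  define g where "g x = exp (- \<beta> * x) * Wf x" for x
  define h where "h k x = (if x < real k then g x else 0)" for k x
  define I where "I k = (1 - z) / \<beta> * (\<Sum>m<k. w m * z ^ m)" for k
  have hI: "(h k has_integral I k) {0..}" for k
  proof -
    have eq: "(\<Sum>m<k. w m * (z ^ m - z ^ Suc m)) / \<beta> = I k"
      by (simp add: I_def sum_distrib_left sum_divide_distrib algebra_simps)
    have "(g has_integral ((\<Sum>m<k. w m * (z ^ m - z ^ Suc m)) / \<beta>)) {0..real k}"
      unfolding g_def[abs_def] z_def by (rule int_0N[OF b])
    then have "(g has_integral I k) {0..real k}" by (simp only: eq)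
    then have "(h k has_integral I k) {0..real k}"
      by (rule has_integral_spike_finite[where S="{real k}", rotated 2]) (auto simp: h_def)
    then show ?thesis
      by (rule has_integral_on_superset) (auto simp: h_def g_def Wf_neg)
  qed
  have mono: "h k x \<le> h (Suc k) x" if "x \<in> {0..}" for k x
    using Wf_nonneg[of x] by (auto simp: h_def g_def)
  have lim: "(\<lambda>k. h k x) \<longlonglongrightarrow> g x" for x
  proof (rule tendsto_eventually)
    show "\<forall>\<^sub>F k in sequentially. h k x = g x"
      unfolding eventually_sequentially
      by (rule exI[of _ "nat \<lceil>x\<rceil> + 1"]) (auto simp: h_def, linarith)
  qed
  have gsum: "(\<lambda>k. \<Sum>m<k. w m * z ^ m) \<longlonglongrightarrow> 1 / (z * (L - q))"
    using gen by (simp add: sums_def)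
  then have Ilim: "I \<longlonglongrightarrow> (1 - z) / \<beta> * (1 / (z * (L - q)))"
    unfolding I_def[abs_def] by (intro tendsto_mult tendsto_const)
  have intI: "integral {0..} (h k) = I k" for k using hI integral_unique by blast
  have "bounded (range (\<lambda>k. integral {0..} (h k)))"
    unfolding intI[abs_def] using Ilim convergent_imp_bounded[of I] by (auto simp: convergent_def image_def)
  then have mc: "g integrable_on {0..} \<and> (\<lambda>k. integral {0..} (h k)) \<longlonglongrightarrow> integral {0..} g"
    using monotone_convergence_increasing[of h "{0..}" g] hI mono lim by (auto simp: integrable_on_def)
  then have "integral {0..} g = (1 - z) / \<beta> * (1 / (z * (L - q)))"
    using Ilim LIMSEQ_unique intI by auto
  also have "\<dots> = (exp \<beta> - 1) / (\<beta> * (L - q))"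
  proof -
    have "exp \<beta> = 1 / z" using ze z by (simp add: field_simps)
    then show ?thesis using z b Lq by (simp add: field_simps)
  qed
  finally have eqI: "integral {0..} g = (exp \<beta> - 1) / (\<beta> * (L - q))" .
  from mc have "(g has_integral integral {0..} g) {0..}" by (simp add: integrable_integral)
  then have "(g has_integral ((exp \<beta> - 1) / (\<beta> * (L - q)))) {0..}" by (simp only: eqI)
  then show ?thesis unfolding g_def[abs_def] L_def .
qed

lemma Wf_scale: "is_scale_W nu q Wf"
  unfolding is_scale_W_def
  using Wf_nonneg Wf_neg Wf_rcont Wf_pc Wf_exp_order laplace_Wf by auto

end


lemma lc_deriv0:
  fixes f :: "real \<Rightarrow> real"
  assumes "\<exists>e>0. \<forall>y. \<bar>y - x\<bar> < e \<longrightarrow> f y = f x"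
  shows "DERIV f x :> 0"
proof -
  obtain e where e: "e > 0" "\<forall>y. \<bar>y - x\<bar> < e \<longrightarrow> f y = f x" using assms by blast
  have "eventually (\<lambda>y. f y = f x) (nhds x)"
    unfolding eventually_nhds_metric dist_real_def using e by blast
  then have "DERIV f x :> 0 \<longleftrightarrow> DERIV (\<lambda>_. f x) x :> 0"
    by (intro DERIV_cong_ev) auto
  then show ?thesis by simp
qed

lemma tail_piece:
  fixes f :: "real \<Rightarrow> real" and s e cst \<beta> :: real
  assumes "0 \<le> s" "0 < e" "0 < \<beta>"
    and fs: "\<And>x. 0 \<le> x \<Longrightarrow> x < s \<Longrightarrow> f x = 0"
    and fc: "\<And>x. s \<le> x \<Longrightarrow> x < s + e \<Longrightarrow> f x = cst"
  shows "((\<lambda>x. exp (- \<beta> * x) * f x) has_integral (cst * (exp (- \<beta> * s) - exp (- \<beta> * (s + e))) / \<beta>)) {0..s + e}"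
proof -
  let ?g = "\<lambda>x. exp (- \<beta> * x) * f x"
  have "((\<lambda>x. 0) has_integral 0) {0..s}" by simp
  then have I1: "(?g has_integral 0) {0..s}"
    by (rule has_integral_spike_finite[where S="{s}", rotated 2]) (auto simp: fs)
  let ?F = "\<lambda>x. - cst * exp (- \<beta> * x) / \<beta>"
  have "((\<lambda>x. cst * exp (- \<beta> * x)) has_integral (?F (s + e) - ?F s)) {s..s + e}"
  proof (rule fundamental_theorem_of_calculus)
    show "s \<le> s + e" using assms by simp
    fix x assume "x \<in> {s..s + e}"
    have "(?F has_real_derivative cst * exp (- \<beta> * x)) (at x within {s..s + e})"
      using assms by (auto intro!: derivative_eq_intros simp: field_simps)
    then show "(?F has_vector_derivative cst * exp (- \<beta> * x)) (at x within {s..s + e})"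
      by (simp add: has_real_derivative_iff_has_vector_derivative)
  qed
  moreover have "?F (s + e) - ?F s = cst * (exp (- \<beta> * s) - exp (- \<beta> * (s + e))) / \<beta>"
    using assms by (simp add: field_simps)
  ultimately have "((\<lambda>x. cst * exp (- \<beta> * x)) has_integral (cst * (exp (- \<beta> * s) - exp (- \<beta> * (s + e))) / \<beta>)) {s..s + e}"
    by simp
  then have I2: "(?g has_integral (cst * (exp (- \<beta> * s) - exp (- \<beta> * (s + e))) / \<beta>)) {s..s + e}"
    by (rule has_integral_spike_finite[where S="{s + e}", rotated 2]) (auto simp: fc)
  show ?thesis using has_integral_combine[OF _ _ I1 I2] assms by simp
qed

lemma laplace_unique:
  fixes f :: "real \<Rightarrow> real" and C c \<beta>0 :: real
  assumes neg: "\<And>x. x < 0 \<Longrightarrow> f x = 0"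
    and rc: "\<And>x. continuous (at_right x) f"
    and lc: "\<And>a b. finite {x\<in>{a..b}. \<not> (\<exists>e>0. \<forall>y. \<bar>y - x\<bar> < e \<longrightarrow> f y = f x)}"
    and C0: "0 \<le> C" and c0: "0 \<le> c"
    and bound: "\<And>x. 0 \<le> x \<Longrightarrow> \<bar>f x\<bar> \<le> C * exp (c * x)"
    and absint: "\<And>\<beta>. \<beta> > \<beta>0 \<Longrightarrow> (\<lambda>x. exp (- \<beta> * x) * f x) absolutely_integrable_on {0..}"
    and zero: "\<And>\<beta>. \<beta> > \<beta>0 \<Longrightarrow> ((\<lambda>x. exp (- \<beta> * x) * f x) has_integral 0) {0..}"
  shows "f x = 0"
proof (rule ccontr)
  assume fx: "f x \<noteq> 0"
  define A where "A = {t. 0 \<le> t \<and> (\<forall>y<t. f y = 0)}"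
  have A0: "0 \<in> A" using neg by (auto simp: A_def)
  have Abdd: "bdd_above A"
  proof (rule bdd_aboveI[of _ x])
    fix t assume "t \<in> A"
    show "t \<le> x"
    proof (rule ccontr)
      assume "\<not> t \<le> x"
      then have "x < t" by simp
      with \<open>t \<in> A\<close> have "f x = 0" by (auto simp: A_def)
      with fx show False by simp
    qed
  qed
  define s where "s = Sup A"
  have s0: "0 \<le> s" using cSup_upper[OF A0 Abdd] by (simp add: s_def)
  have below: "f y = 0" if "y < s" for y
  proof -
    have ne: "A \<noteq> {}" using A0 by blast
    have "y < Sup A" using that by (simp add: s_def)
    then have "\<exists>t\<in>A. y < t" using less_cSup_iff[OF ne Abdd] by blast
    then obtain t where "t \<in> A" "y < t" by blast
    then show ?thesis by (auto simp: A_def)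
  qed
  define Bd where "Bd = {x\<in>{s..s+1}. \<not> (\<exists>e>0. \<forall>y. \<bar>y - x\<bar> < e \<longrightarrow> f y = f x)}"
  have fBd: "finite Bd" unfolding Bd_def by (rule lc)
  define D where "D = insert 1 ((\<lambda>y. y - s) ` {y\<in>Bd. y > s})"
  define e where "e = Min D"
  have fD: "finite D" using fBd by (simp add: D_def)
  have e0: "0 < e" unfolding e_def using fD by (subst Min_gr_iff) (auto simp: D_def)
  have e1: "e \<le> 1" unfolding e_def using fD by (intro Min_le) (auto simp: D_def)
  have good: "\<exists>d>0. \<forall>z. \<bar>z - y\<bar> < d \<longrightarrow> f z = f y" if "s < y" "y < s + e" for y
  proof (rule ccontr)
    assume "\<not> ?thesis"
    then have "y \<in> Bd" using that e1 by (auto simp: Bd_def)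
    then have "y - s \<in> D" using that by (auto simp: D_def)
    then have "e \<le> y - s" unfolding e_def using fD by (intro Min_le)
    then show False using that by simp
  qed
  define cst where "cst = f (s + e / 2)"
  have const: "f y = cst" if "s < y" "y < s + e" for y
  proof -
    have "f y = f (s + e / 2)"
    proof (rule DERIV_isconst3[of s "s + e" y "s + e / 2" f])
      show "s < s + e" using e0 by simp
      show "y \<in> {s<..<s + e}" using that by simp
      show "s + e / 2 \<in> {s<..<s + e}" using e0 by simp
      fix z assume "z \<in> {s<..<s + e}"
      then show "DERIV f z :> 0" using good by (intro lc_deriv0) auto
    qed
    then show ?thesis by (simp add: cst_def)
  qed
  have fs: "f s = cst"
  proof -
    have "(f \<longlongrightarrow> f s) (at_right s)" using rc[of s] by (simp add: continuous_within)
    moreover have "(f \<longlongrightarrow> cst) (at_right s)"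
    proof (rule tendsto_eventually)
      show "\<forall>\<^sub>F y in at_right s. f y = cst"
        unfolding eventually_at_right_field using e0 const by (intro exI[of _ "s + e"]) auto
    qed
    ultimately show ?thesis using tendsto_unique[of "at_right s"] by auto
  qed
  have fc: "f y = cst" if "s \<le> y" "y < s + e" for y
    using that const fs by (cases "y = s") auto
  have cst0: "cst = 0"
  proof (rule ccontr)
    assume cne: "cst \<noteq> 0"
    define b where "b = s + e"
    define K where "K = 2 * C * exp (c * b)"
    define Q where "Q = (\<bar>cst\<bar> + K) / \<bar>cst\<bar>"
    have K0: "0 \<le> K" using C0 by (simp add: K_def)
    have Q1: "1 \<le> Q" using cne K0 by (simp add: Q_def field_simps)
    define \<beta> where "\<beta> = max (max (\<beta>0 + 1) (2 * c + 1)) ((ln Q + 1) / e)"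
    have b1: "\<beta> > \<beta>0" "\<beta> \<ge> 2 * c + 1" "\<beta> \<ge> (ln Q + 1) / e" by (auto simp: \<beta>_def)
    have bpos: "0 < \<beta>" using b1 c0 by simp
    have bc: "0 < \<beta> - c" using b1 c0 by simp
    let ?g = "\<lambda>x. exp (- \<beta> * x) * f x"
    define J where "J = cst * (exp (- \<beta> * s) - exp (- \<beta> * b)) / \<beta>"
    have IJ: "(?g has_integral J) {0..b}"
      unfolding J_def b_def
      by (rule tail_piece[OF s0 e0 bpos]) (auto simp: below fc)
    have "?g absolutely_integrable_on {b..}"
      by (rule set_integrable_subset[OF absint[OF b1(1)]]) (use s0 e0 in \<open>auto simp: b_def\<close>)
    then have gint: "?g integrable_on {b..}" by (rule set_lebesgue_integral_eq_integral(1))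
    define Kt where "Kt = integral {b..} ?g"
    have IK: "(?g has_integral Kt) {b..}" using gint by (simp add: Kt_def integrable_integral)
    have "(?g has_integral (J + Kt)) ({0..b} \<union> {b..})"
      by (rule has_integral_Un[OF IJ IK]) (use s0 e0 in \<open>auto simp: b_def\<close>)
    moreover have "{0..b} \<union> {b..} = {0..}" using s0 e0 by (auto simp: b_def)
    ultimately have "(?g has_integral (J + Kt)) {0..}" by simp
    then have JK: "J + Kt = 0" using zero[OF b1(1)] has_integral_unique by blast
    have dom: "((\<lambda>x. C * exp (- (\<beta> - c) * x)) has_integral (C * (exp (- (\<beta> - c) * b) / (\<beta> - c)))) {b..}"
      by (intro has_integral_mult_right has_integral_exp_minus_to_infinity bc)
    have "norm Kt \<le> integral {b..} (\<lambda>x. C * exp (- (\<beta> - c) * x))"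
      unfolding Kt_def
    proof (rule integral_norm_bound_integral[OF gint])
      show "(\<lambda>x. C * exp (- (\<beta> - c) * x)) integrable_on {b..}" using dom by blast
      fix x assume "x \<in> {b..}"
      then have x0: "0 \<le> x" using s0 e0 by (simp add: b_def)
      have "norm (?g x) = exp (- \<beta> * x) * \<bar>f x\<bar>" by (simp add: abs_mult)
      also have "\<dots> \<le> exp (- \<beta> * x) * (C * exp (c * x))" by (intro mult_left_mono bound x0) auto
      also have "\<dots> = C * exp (- (\<beta> - c) * x)" by (simp add: algebra_simps exp_add[symmetric])
      finally show "norm (?g x) \<le> C * exp (- (\<beta> - c) * x)" .
    qed
    moreover have "integral {b..} (\<lambda>x. C * exp (- (\<beta> - c) * x)) = C * (exp (- (\<beta> - c) * b) / (\<beta> - c))"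
      using dom by (rule integral_unique)
    ultimately have Kb: "\<bar>Kt\<bar> \<le> C * (exp (- (\<beta> - c) * b) / (\<beta> - c))" by simp
    have "J = - Kt" using JK by linarith
    then have Jb: "\<bar>J\<bar> \<le> C * (exp (- (\<beta> - c) * b) / (\<beta> - c))" using Kb by simp
    have Dn: "0 \<le> exp (- \<beta> * s) - exp (- \<beta> * b)"
    proof -
      have "0 \<le> \<beta> * e" using bpos e0 by simp
      then have "- \<beta> * b \<le> - \<beta> * s" by (simp add: b_def algebra_simps)
      then show ?thesis by simp
    qed
    have absJ: "\<bar>J\<bar> = \<bar>cst\<bar> * (exp (- \<beta> * s) - exp (- \<beta> * b)) / \<beta>"
      unfolding J_def using Dn bpos by (simp add: abs_mult abs_divide)
    have "\<bar>cst\<bar> * (exp (- \<beta> * s) - exp (- \<beta> * b)) / \<beta> \<le> C * (exp (- (\<beta> - c) * b) / (\<beta> - c))"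
      using Jb unfolding absJ .
    then have "\<bar>cst\<bar> * (exp (- \<beta> * s) - exp (- \<beta> * b)) \<le> \<beta> * (C * (exp (- (\<beta> - c) * b) / (\<beta> - c)))"
      using bpos by (simp add: pos_divide_le_eq mult.commute)
    then have "exp (\<beta> * s) * (\<bar>cst\<bar> * (exp (- \<beta> * s) - exp (- \<beta> * b)))
       \<le> exp (\<beta> * s) * (\<beta> * (C * (exp (- (\<beta> - c) * b) / (\<beta> - c))))"
      by (intro mult_left_mono) auto
    moreover have "exp (\<beta> * s) * (\<bar>cst\<bar> * (exp (- \<beta> * s) - exp (- \<beta> * b))) = \<bar>cst\<bar> * (1 - exp (- \<beta> * e))"
    proof -
      have h1: "exp (\<beta> * s) * exp (- \<beta> * s) = 1" by (simp add: exp_add[symmetric])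
      have "\<beta> * s + - \<beta> * b = - \<beta> * e" by (simp add: b_def algebra_simps)
      then have h2: "exp (\<beta> * s) * exp (- \<beta> * b) = exp (- \<beta> * e)" by (simp only: exp_add[symmetric])
      have "exp (\<beta> * s) * (\<bar>cst\<bar> * (exp (- \<beta> * s) - exp (- \<beta> * b)))
         = \<bar>cst\<bar> * (exp (\<beta> * s) * exp (- \<beta> * s) - exp (\<beta> * s) * exp (- \<beta> * b))"
        by (simp add: algebra_simps)
      then show ?thesis by (simp only: h1 h2)
    qed
    moreover have "exp (\<beta> * s) * (\<beta> * (C * (exp (- (\<beta> - c) * b) / (\<beta> - c))))
        = (\<beta> / (\<beta> - c)) * (C * exp (c * b)) * exp (- \<beta> * e)"
    proof -
      have "\<beta> * s + - (\<beta> - c) * b = c * b + - \<beta> * e" by (simp add: b_def algebra_simps)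
      then have h3: "exp (\<beta> * s) * exp (- (\<beta> - c) * b) = exp (c * b) * exp (- \<beta> * e)"
        by (simp only: exp_add[symmetric])
      have "exp (\<beta> * s) * (\<beta> * (C * (exp (- (\<beta> - c) * b) / (\<beta> - c))))
          = (\<beta> / (\<beta> - c)) * C * (exp (\<beta> * s) * exp (- (\<beta> - c) * b))"
        by (simp add: divide_inverse mult.commute mult.left_commute)
      then show ?thesis by (simp only: h3 mult.assoc)
    qed
    moreover have "(\<beta> / (\<beta> - c)) * (C * exp (c * b)) * exp (- \<beta> * e) \<le> 2 * (C * exp (c * b)) * exp (- \<beta> * e)"
    proof -
      have X2: "\<beta> / (\<beta> - c) \<le> 2" using bc b1 c0 by (simp add: field_simps)
      have Y0: "0 \<le> C * exp (c * b) * exp (- \<beta> * e)" using C0 by simp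
      show ?thesis using mult_right_mono[OF X2 Y0] by (simp add: mult.assoc)
    qed
    ultimately have "\<bar>cst\<bar> * (1 - exp (- \<beta> * e)) \<le> 2 * (C * exp (c * b)) * exp (- \<beta> * e)"
      by linarith
    then have ineq: "\<bar>cst\<bar> \<le> (\<bar>cst\<bar> + K) * exp (- \<beta> * e)" by (simp add: K_def algebra_simps)
    have "exp (- \<beta> * e) \<le> exp (- (ln Q + 1))"
    proof -
      have "(ln Q + 1) \<le> \<beta> * e" using b1(3) e0 by (simp add: field_simps)
      then show ?thesis by simp
    qed
    also have "\<dots> < exp (- ln Q)" by simp
    also have "\<dots> = 1 / Q" using Q1 by (simp add: exp_minus inverse_eq_divide)
    finally have "exp (- \<beta> * e) < 1 / Q" .
    then have "(\<bar>cst\<bar> + K) * exp (- \<beta> * e) < (\<bar>cst\<bar> + K) * (1 / Q)"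
      using cne K0 by (intro mult_strict_left_mono) auto
    also have "\<dots> = \<bar>cst\<bar>" using cne K0 by (simp add: Q_def field_simps)
    finally show False using ineq by simp
  qed
  have "s + e \<in> A" unfolding A_def
  proof (intro CollectI conjI allI impI)
    show "0 \<le> s + e" using s0 e0 by simp
    fix y assume y: "y < s + e"
    show "f y = 0"
    proof (cases "y < s")
      case True then show ?thesis by (rule below)
    next
      case False then show ?thesis using fc[of y] cst0 y by simp
    qed
  qed
  then have "s + e \<le> Sup A" by (rule cSup_upper[OF _ Abdd])
  then show False using e0 by (simp add: s_def)
qed


context sf begin

lemma scale_parts:
  assumes "is_scale_W nu q V"
  shows "\<And>x. 0 \<le> V x" "\<And>x. x < 0 \<Longrightarrow> V x = 0" "\<And>x. continuous (at_right x) V"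
    "piecewise_constant V" "exp_order V"
    "\<And>\<beta>. \<beta> > Phi nu q \<Longrightarrow> ((\<lambda>x. exp (- \<beta> * x) * V x) has_integral ((exp \<beta> - 1) / (\<beta> * (laplace_exp nu \<beta> - q)))) {0..}"
  using assms unfolding is_scale_W_def by blast+

lemma scale_unique:
  assumes V: "is_scale_W nu q V"
  shows "V = Wf"
proof -
  have W: "is_scale_W nu q Wf" by (rule Wf_scale)
  note Vp = scale_parts[OF V] and Wp = scale_parts[OF W]
  define f where "f x = V x - Wf x" for x
  obtain C1 c1 where b1: "\<And>x. 0 \<le> x \<Longrightarrow> \<bar>V x\<bar> \<le> C1 * exp (c1 * x)"
    using Vp(5) unfolding exp_order_def by blast
  obtain C2 c2 where b2: "\<And>x. 0 \<le> x \<Longrightarrow> \<bar>Wf x\<bar> \<le> C2 * exp (c2 * x)"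
    using Wp(5) unfolding exp_order_def by blast
  have C1: "0 \<le> C1" using b1[of 0] by simp
  have C2: "0 \<le> C2" using b2[of 0] by simp
  define c where "c = max (max c1 c2) 0"
  have "f x = 0" for x
  proof (rule laplace_unique[of f "C1 + C2" c "Phi nu q"])
    show "f x = 0" if "x < 0" for x using Vp(2)[OF that] Wp(2)[OF that] by (simp add: f_def)
    show "continuous (at_right x) f" for x
      unfolding f_def[abs_def] by (intro continuous_diff Vp(3) Wp(3))
    show "finite {x \<in> {a..b}. \<not> (\<exists>e>0. \<forall>y. \<bar>y - x\<bar> < e \<longrightarrow> f y = f x)}" for a b
    proof -
      let ?B = "\<lambda>g. {x \<in> {a..b}. \<not> (\<exists>e>0. \<forall>y. \<bar>y - x\<bar> < e \<longrightarrow> g y = g x)}"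
      have "finite (?B V)" using Vp(4) unfolding piecewise_constant_def by blast
      moreover have "finite (?B Wf)" using Wp(4) unfolding piecewise_constant_def by blast
      moreover have "?B f \<subseteq> ?B V \<union> ?B Wf"
      proof
        fix x assume x: "x \<in> ?B f"
        show "x \<in> ?B V \<union> ?B Wf"
        proof (rule ccontr)
          assume "x \<notin> ?B V \<union> ?B Wf"
          then obtain e1 e2 where e1: "e1 > 0" "\<forall>y. \<bar>y - x\<bar> < e1 \<longrightarrow> V y = V x"
            and e2: "e2 > 0" "\<forall>y. \<bar>y - x\<bar> < e2 \<longrightarrow> Wf y = Wf x" using x by blast
          have "\<forall>y. \<bar>y - x\<bar> < min e1 e2 \<longrightarrow> f y = f x"
          proof (intro allI impI)
            fix y assume "\<bar>y - x\<bar> < min e1 e2"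
            then have "\<bar>y - x\<bar> < e1" "\<bar>y - x\<bar> < e2" by auto
            then have "V y = V x" "Wf y = Wf x" using e1(2) e2(2) by blast+
            then show "f y = f x" by (simp add: f_def)
          qed
          moreover have "min e1 e2 > 0" using e1(1) e2(1) by simp
          ultimately have "\<exists>e>0. \<forall>y. \<bar>y - x\<bar> < e \<longrightarrow> f y = f x" by blast
          then show False using x by blast
        qed
      qed
      ultimately show ?thesis by (meson finite_UnI finite_subset)
    qed
    show "0 \<le> C1 + C2" using C1 C2 by simp
    show "0 \<le> c" by (simp add: c_def)
    show "\<bar>f x\<bar> \<le> (C1 + C2) * exp (c * x)" if "0 \<le> x" for x
    proof -
      have "c1 * x \<le> c * x" "c2 * x \<le> c * x"
        using that by (auto simp: c_def intro!: mult_right_mono)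
      then have "exp (c1 * x) \<le> exp (c * x)" "exp (c2 * x) \<le> exp (c * x)" by auto
      then have "C1 * exp (c1 * x) \<le> C1 * exp (c * x)" "C2 * exp (c2 * x) \<le> C2 * exp (c * x)"
        using C1 C2 by (auto intro: mult_left_mono)
      moreover have "\<bar>f x\<bar> \<le> \<bar>V x\<bar> + \<bar>Wf x\<bar>" by (simp add: f_def)
      moreover have "(C1 + C2) * exp (c * x) = C1 * exp (c * x) + C2 * exp (c * x)" by (simp add: distrib_right)
      ultimately show ?thesis using b1[OF that] b2[OF that] by linarith
    qed
    fix \<beta> :: real assume b: "\<beta> > Phi nu q"
    note iV = Vp(6)[OF b] and iW = Wp(6)[OF b]
    have fe: "(\<lambda>x. exp (- \<beta> * x) * f x) = (\<lambda>x. exp (- \<beta> * x) * V x - exp (- \<beta> * x) * Wf x)"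
      by (simp add: f_def right_diff_distrib)
    show "((\<lambda>x. exp (- \<beta> * x) * f x) has_integral 0) {0..}"
      unfolding fe using has_integral_diff[OF iV iW] by simp
    have aV: "(\<lambda>x. exp (- \<beta> * x) * V x) absolutely_integrable_on {0..}"
      using iV by (intro nonnegative_absolutely_integrable_1) (auto intro!: mult_nonneg_nonneg Vp(1))
    have aW: "(\<lambda>x. exp (- \<beta> * x) * Wf x) absolutely_integrable_on {0..}"
      using iW by (intro nonnegative_absolutely_integrable_1) (auto intro!: mult_nonneg_nonneg Wp(1))
    show "(\<lambda>x. exp (- \<beta> * x) * f x) absolutely_integrable_on {0..}"
      unfolding fe by (rule set_integral_diff(1)[OF aV aW])
  qed
  then show ?thesis by (auto simp: f_def)
qed

lemma scale_W_eq: "scale_W nu q = Wf"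
  unfolding scale_W_def using Wf_scale scale_unique by (rule the_equality)

lemma int_Wf: "(Wf has_integral (\<Sum>m<N. w m)) {0..real N}"
proof (induction N)
  case 0
  then show ?case using has_integral_refl(2)[of Wf 0] by simp
next
  case (Suc N)
  have "((\<lambda>x. w N) has_integral w N) {real N..real N + 1}"
    using has_integral_const_real[of "w N" "real N" "real N + 1"] by simp
  then have "(Wf has_integral w N) {real N..real N + 1}"
    by (rule has_integral_spike_finite[where S="{real N + 1}", rotated 2]) (auto simp: Wf_ivl)
  then have "(Wf has_integral ((\<Sum>m<N. w m) + w N)) {0..real N + 1}"
    using has_integral_combine[OF _ _ Suc.IH] by simp
  then show ?case by (simp add: add.commute)
qed

lemma scale_Z_nat: "scale_Z nu q (real m) - 1 = q * (\<Sum>i<m. w i)"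
  unfolding scale_Z_def scale_W_eq using int_Wf[of m] by (simp add: integral_unique)

lemma reidx: fixes m :: nat shows "(\<Sum>k=1..m. g (m - k) k) = (\<Sum>i<m. g i (m - i))"
  by (rule sum.reindex_bij_witness[of _ "\<lambda>i. m - i" "\<lambda>k. m - k"]) auto

lemma w_rec_k: "w m = 1 / nu 1 + (\<Sum>k=1..m. w (m - k) * cc k)"
proof -
  have "(\<Sum>k=1..m. w (m - k) * cc k) = (\<Sum>i<m. w i * cc (m - i))"
    using reidx[of "\<lambda>i k. w i * cc k" m] by simp
  then show ?thesis by (subst w.simps) simp
qed

lemma S_rec: "(\<Sum>i<Suc n. w i) = real (Suc n) / nu 1 + (\<Sum>k=1..n. (\<Sum>i<Suc n - k. w i) * cc k)"
proof (induction n)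
  case 0
  then show ?case by (simp add: w.simps[of 0])
next
  case (Suc n)
  have split: "(\<Sum>k=1..Suc n. (\<Sum>i<Suc (Suc n) - k. w i) * cc k)
      = (\<Sum>k=1..Suc n. (\<Sum>i<Suc n - k. w i) * cc k) + (\<Sum>k=1..Suc n. w (Suc n - k) * cc k)"
  proof -
    have "(\<Sum>i<Suc (Suc n) - k. w i) = (\<Sum>i<Suc n - k. w i) + w (Suc n - k)" if "k \<in> {1..Suc n}" for k
    proof -
      have "Suc (Suc n) - k = Suc (Suc n - k)" using that by auto
      then show ?thesis by simp
    qed
    then show ?thesis by (simp add: sum.distrib[symmetric] distrib_right)
  qed
  have red: "(\<Sum>k=1..Suc n. (\<Sum>i<Suc n - k. w i) * cc k) = (\<Sum>k=1..n. (\<Sum>i<Suc n - k. w i) * cc k)"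
    by simp
  then have "(\<Sum>i<Suc (Suc n). w i) = (\<Sum>i<Suc n. w i) + w (Suc n)" by simp
  also have "\<dots> = real (Suc n) / nu 1 + (\<Sum>k=1..n. (\<Sum>i<Suc n - k. w i) * cc k) + (1 / nu 1 + (\<Sum>k=1..Suc n. w (Suc n - k) * cc k))"
    using Suc.IH w_rec_k[of "Suc n"] by simp
  also have "\<dots> = real (Suc (Suc n)) / nu 1 + (\<Sum>k=1..Suc n. (\<Sum>i<Suc (Suc n) - k. w i) * cc k)"
  proof -
    have "real (Suc (Suc n)) / nu 1 = real (Suc n) / nu 1 + 1 / nu 1" by (simp add: add_divide_distrib)
    then show ?thesis unfolding split red by linarith
  qed
  finally show ?case .
qed

end

theorem corollary3p4:
  fixes nu :: "int \<Rightarrow> real" and q :: real and n :: nat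
  assumes "skip_free_levy_measure nu" and "0 \<le> q"
  shows "(scale_W nu q (real (n + 1)) =
           scale_W nu q 0 + (\<Sum>k=1..n+1. scale_W nu q (real (n + 1 - k)) * (q + tail nu k) / nu 1)) \<and>
         (scale_W nu q 0 = 1 / nu 1) \<and>
         (scale_Z nu q (real (n + 1)) - 1 =
           real (n + 1) * q / nu 1 +
           (\<Sum>k=1..n. (scale_Z nu q (real (n + 1 - k)) - 1) * (q + tail nu k) / nu 1)) \<and>
         scale_Z nu q 0 - 1 = 0"
proof -
  interpret sf nu q using assms by unfold_locales
  have W0: "scale_W nu q 0 = 1 / nu 1"
    using Wf_nat[of 0] by (simp only: scale_W_eq of_nat_0) (simp add: w.simps[of 0])
  have c1: "scale_W nu q (real (n + 1)) =
           scale_W nu q 0 + (\<Sum>k=1..n+1. scale_W nu q (real (n + 1 - k)) * (q + tail nu k) / nu 1)"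
  proof -
    have "(\<Sum>k=1..n+1. scale_W nu q (real (n + 1 - k)) * (q + tail nu k) / nu 1)
        = (\<Sum>k=1..n+1. w (n + 1 - k) * cc k)"
    proof (rule sum.cong[OF refl])
      fix k assume "k \<in> {1..n+1}"
      show "scale_W nu q (real (n + 1 - k)) * (q + tail nu k) / nu 1 = w (n + 1 - k) * cc k"
        by (simp only: scale_W_eq Wf_nat) (simp add: cc_def tail_eq)
    qed
    moreover have "scale_W nu q (real (n + 1)) = w (n + 1)" by (simp only: scale_W_eq Wf_nat)
    ultimately show ?thesis using w_rec_k[of "n + 1"] W0 by simp
  qed
  have c3: "scale_Z nu q (real (n + 1)) - 1 =
           real (n + 1) * q / nu 1 +
           (\<Sum>k=1..n. (scale_Z nu q (real (n + 1 - k)) - 1) * (q + tail nu k) / nu 1)"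
  proof -
    have "(\<Sum>k=1..n. (scale_Z nu q (real (n + 1 - k)) - 1) * (q + tail nu k) / nu 1)
        = q * (\<Sum>k=1..n. (\<Sum>i<Suc n - k. w i) * cc k)"
      unfolding sum_distrib_left
    proof (rule sum.cong[OF refl])
      fix k assume "k \<in> {1..n}"
      show "(scale_Z nu q (real (n + 1 - k)) - 1) * (q + tail nu k) / nu 1 = q * ((\<Sum>i<Suc n - k. w i) * cc k)"
        by (simp only: scale_Z_nat) (simp add: cc_def tail_eq)
    qed
    moreover have "scale_Z nu q (real (n + 1)) - 1 = q * (\<Sum>i<Suc n. w i)"
      by (simp only: scale_Z_nat) simp
    moreover have "q * (\<Sum>i<Suc n. w i) = real (n + 1) * q / nu 1 + q * (\<Sum>k=1..n. (\<Sum>i<Suc n - k. w i) * cc k)"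
    proof -
      have "q * (\<Sum>i<Suc n. w i) = q * (real (Suc n) / nu 1 + (\<Sum>k=1..n. (\<Sum>i<Suc n - k. w i) * cc k))"
        by (simp only: S_rec)
      also have "\<dots> = real (n + 1) * q / nu 1 + q * (\<Sum>k=1..n. (\<Sum>i<Suc n - k. w i) * cc k)"
        by (simp only: distrib_left) simp
      finally show ?thesis .
    qed
    ultimately show ?thesis by linarith
  qed
  have c4: "scale_Z nu q 0 - 1 = 0" using scale_Z_nat[of 0] by (simp only: of_nat_0) simp
  show ?thesis using c1 W0 c3 c4 by blast
qed


end
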